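(* Let $G_*$ be a crossed simplicial group with structural short exact sequence $1 \to P_* \to G_* \xrightarrow{\pi} N_* \to 1$, and let $\Gamma_n = G_n/\!\!/P_n$ be the action groupoids. For $0\le i\le n$ define $s_i\colon\Gamma_n\to\Gamma_{n+1}$ and $d_i\colon\Gamma_n\to\Gamma_{n-1}$ by $$s_i[\sigma,f]=[s_i(\sigma),\, s_{\sigma^{-1}(i)}(f^{-1})^{-1}],\qquad d_i[\sigma,f]=[d_i(\sigma),\, d_{\sigma^{-1}(i)}(f^{-1})^{-1}].$$ Then these maps are functors of groupoids and make $\{\Gamma_n\}_{n\ge0}$ a simplicial groupoid, i.e. they satisfy the simplicial identities.
   Context: A crossed simplicial group $G_*$ consists of groups $G_n$ ($n\ge0$), a left action of $G_n$ on $[n]=\{0,\dots,n\}$, and maps $d_i\colon G_n\to G_{n-1}$, $s_i\colon G_n\to G_{n+1}$ making $G_*$ a simplicial set, such that $d_i(gh)=d_i(g)d_{g^{-1}(i)}(h)$ and $s_i(gh)=s_i(g)s_{g^{-1}(i)}(h)$. Every crossed simplicial group fits into a canonical (structural) short exact sequence of crossed simplicial groups $1\to P_*\to G_*\xrightarrow{\pi}N_*\to1$, where $P_*$ is a simplicial group acting trivially on each $[n]$ (so the action of $G_n$ on $[n]$ factors through $N_n$) and $N_*$ is one of seven specific crossed simplicial groups. The action groupoid $\Gamma_n=G_n/\!\!/P_n$ has as objects the elements $\sigma$ of $G_n/P_n=N_n$, and a morphism $\sigma\to\sigma\pi(f)^{-1}$ for each $f\in G_n$, written $[\sigma,f]$;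 composition is $[\sigma\pi(f)^{-1},g]\cdot[\sigma,f]=[\sigma,gf]$. In the formulas, $s_i(\sigma), d_i(\sigma)$ are computed in $N_*$, $\sigma^{-1}(i)$ uses the action of $N_n$ on $[n]$, and the outer $s_j, d_j$ on $f^{-1}$ are those of $G_*$. *)

theory Defs
  imports "HOL-Algebra.Group"
begin

definition simplicial_set ::
  "(nat \<Rightarrow> 'a set) \<Rightarrow> (nat \<Rightarrow> nat \<Rightarrow> 'a \<Rightarrow> 'a) \<Rightarrow> (nat \<Rightarrow> nat \<Rightarrow> 'a \<Rightarrow> 'a) \<Rightarrow> bool" where
  "simplicial_set C d s \<longleftrightarrow>
     (\<forall>n i x. 1 \<le> n \<and> i \<le> n \<and> x \<in> C n \<longrightarrow> d n i x \<in> C (n - 1)) \<and>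
     (\<forall>n i x. i \<le> n \<and> x \<in> C n \<longrightarrow> s n i x \<in> C (Suc n)) \<and>
     \<comment> \<open>d_i d_j = d_(j-1) d_i  for i < j\<close>
     (\<forall>n i j x. 2 \<le> n \<and> i < j \<and> j \<le> n \<and> x \<in> C n \<longrightarrow>
        d (n - 1) i (d n j x) = d (n - 1) (j - 1) (d n i x)) \<and>
     \<comment> \<open>d_i s_j = s_(j-1) d_i  for i < j\<close>
     (\<forall>n i j x. i < j \<and> j \<le> n \<and> x \<in> C n \<longrightarrow>
        d (Suc n) i (s n j x) = s (n - 1) (j - 1) (d n i x)) \<and>
     \<comment> \<open>d_j s_j = id = d_(j+1) s_j\<close>
     (\<forall>n j x. j \<le> n \<and> x \<in> C n \<longrightarrow>
        d (Suc n) j (s n j x) = x \<and> d (Suc n) (Suc j) (s n j x) = x) \<and>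
     \<comment> \<open>d_i s_j = s_j d_(i-1)  for i > j+1\<close>
     (\<forall>n i j x. Suc j < i \<and> i \<le> Suc n \<and> x \<in> C n \<longrightarrow>
        d (Suc n) i (s n j x) = s (n - 1) j (d n (i - 1) x)) \<and>
     \<comment> \<open>s_i s_j = s_(j+1) s_i  for i <= j\<close>
     (\<forall>n i j x. i \<le> j \<and> j \<le> n \<and> x \<in> C n \<longrightarrow>
        s (Suc n) i (s n j x) = s (Suc n) (Suc j) (s n i x))"

definition crossed_simplicial_group ::
  "(nat \<Rightarrow> 'g monoid) \<Rightarrow> (nat \<Rightarrow> 'g \<Rightarrow> nat \<Rightarrow> nat) \<Rightarrow>
   (nat \<Rightarrow> nat \<Rightarrow> 'g \<Rightarrow> 'g) \<Rightarrow> (nat \<Rightarrow> nat \<Rightarrow> 'g \<Rightarrow> 'g) \<Rightarrow> bool" where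
  "crossed_simplicial_group G act d s \<longleftrightarrow>
     (\<forall>n. group (G n)) \<and>
     (\<forall>n g i. g \<in> carrier (G n) \<and> i \<le> n \<longrightarrow> act n g i \<le> n) \<and>
     (\<forall>n i. i \<le> n \<longrightarrow> act n \<one>\<^bsub>G n\<^esub> i = i) \<and>
     (\<forall>n g h i. g \<in> carrier (G n) \<and> h \<in> carrier (G n) \<and> i \<le> n \<longrightarrow>
        act n (g \<otimes>\<^bsub>G n\<^esub> h) i = act n g (act n h i)) \<and>
     simplicial_set (\<lambda>n. carrier (G n)) d s \<and>
     (\<forall>n i g h. 1 \<le> n \<and> i \<le> n \<and> g \<in> carrier (G n) \<and> h \<in> carrier (G n) \<longrightarrow>
        d n i (g \<otimes>\<^bsub>G n\<^esub> h) =
          d n i g \<otimes>\<^bsub>G (n - 1)\<^esub> d n (act n (inv\<^bsub>G n\<^esub> g) i) h) \<and>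
     (\<forall>n i g h. i \<le> n \<and> g \<in> carrier (G n) \<and> h \<in> carrier (G n) \<longrightarrow>
        s n i (g \<otimes>\<^bsub>G n\<^esub> h) =
          s n i g \<otimes>\<^bsub>G (Suc n)\<^esub> s n (act n (inv\<^bsub>G n\<^esub> g) i) h)"

text \<open>Its kernel P n is a simplicial group acting
  trivially on [n], giving the exact sequence 1 -> P -> G -> N -> 1.\<close>

definition csg_quotient_map ::
  "(nat \<Rightarrow> 'g monoid) \<Rightarrow> (nat \<Rightarrow> 'g \<Rightarrow> nat \<Rightarrow> nat) \<Rightarrow>
   (nat \<Rightarrow> nat \<Rightarrow> 'g \<Rightarrow> 'g) \<Rightarrow> (nat \<Rightarrow> nat \<Rightarrow> 'g \<Rightarrow> 'g) \<Rightarrow>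
   (nat \<Rightarrow> 'n monoid) \<Rightarrow> (nat \<Rightarrow> 'n \<Rightarrow> nat \<Rightarrow> nat) \<Rightarrow>
   (nat \<Rightarrow> nat \<Rightarrow> 'n \<Rightarrow> 'n) \<Rightarrow> (nat \<Rightarrow> nat \<Rightarrow> 'n \<Rightarrow> 'n) \<Rightarrow>
   (nat \<Rightarrow> 'g \<Rightarrow> 'n) \<Rightarrow> bool" where
  "csg_quotient_map G actG dG sG N actN dN sN \<pi> \<longleftrightarrow>
     (\<forall>n. \<pi> n \<in> hom (G n) (N n)) \<and>
     (\<forall>n. \<pi> n ` carrier (G n) = carrier (N n)) \<and>
     (\<forall>n i g. 1 \<le> n \<and> i \<le> n \<and> g \<in> carrier (G n) \<longrightarrow> \<pi> (n - 1) (dG n i g) = dN n i (\<pi> n g)) \<and>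
     (\<forall>n i g. i \<le> n \<and> g \<in> carrier (G n) \<longrightarrow> \<pi> (Suc n) (sG n i g) = sN n i (\<pi> n g)) \<and>
     (\<forall>n g i. g \<in> carrier (G n) \<and> i \<le> n \<longrightarrow> actG n g i = actN n (\<pi> n g) i)"

text \<open>The kernel P n (only for documentation).\<close>
definition csg_kernel :: "(nat \<Rightarrow> 'g monoid) \<Rightarrow> (nat \<Rightarrow> 'n monoid) \<Rightarrow> (nat \<Rightarrow> 'g \<Rightarrow> 'n) \<Rightarrow> nat \<Rightarrow> 'g set" where
  "csg_kernel G N \<pi> n = {g \<in> carrier (G n). \<pi> n g = \<one>\<^bsub>N n\<^esub>}"

text \<open>The action groupoid Gamma n = G n // P n: objects are the elements of
  N n = G n / P n, a morphism [sigma, f] (f in G n) goes from sigma to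
  sigma * pi(f)^-1; composition [sigma pi(f)^-1, g] . [sigma, f] = [sigma, g f].\<close>

definition gpd_mor :: "(nat \<Rightarrow> 'g monoid) \<Rightarrow> (nat \<Rightarrow> 'n monoid) \<Rightarrow> nat \<Rightarrow> ('n \<times> 'g) set" where
  "gpd_mor G N n = carrier (N n) \<times> carrier (G n)"

definition gpd_src :: "'n \<times> 'g \<Rightarrow> 'n" where
  "gpd_src x = fst x"

definition gpd_tgt :: "(nat \<Rightarrow> 'n monoid) \<Rightarrow> (nat \<Rightarrow> 'g \<Rightarrow> 'n) \<Rightarrow> nat \<Rightarrow> 'n \<times> 'g \<Rightarrow> 'n" where
  "gpd_tgt N \<pi> n x = fst x \<otimes>\<^bsub>N n\<^esub> inv\<^bsub>N n\<^esub> (\<pi> n (snd x))"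

definition gpd_id :: "(nat \<Rightarrow> 'g monoid) \<Rightarrow> nat \<Rightarrow> 'n \<Rightarrow> 'n \<times> 'g" where
  "gpd_id G n \<sigma> = (\<sigma>, \<one>\<^bsub>G n\<^esub>)"

text \<open>gpd_comp G n y x = y . x (first x, then y).\<close>
definition gpd_comp :: "(nat \<Rightarrow> 'g monoid) \<Rightarrow> nat \<Rightarrow> 'n \<times> 'g \<Rightarrow> 'n \<times> 'g \<Rightarrow> 'n \<times> 'g" where
  "gpd_comp G n y x = (fst x, snd y \<otimes>\<^bsub>G n\<^esub> snd x)"

definition gpd_functor ::
  "(nat \<Rightarrow> 'g monoid) \<Rightarrow> (nat \<Rightarrow> 'n monoid) \<Rightarrow> (nat \<Rightarrow> 'g \<Rightarrow> 'n) \<Rightarrow> nat \<Rightarrow> nat \<Rightarrow>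
   ('n \<Rightarrow> 'n) \<Rightarrow> ('n \<times> 'g \<Rightarrow> 'n \<times> 'g) \<Rightarrow> bool" where
  "gpd_functor G N \<pi> n m Fob Fmor \<longleftrightarrow>
     (\<forall>\<sigma>\<in>carrier (N n). Fob \<sigma> \<in> carrier (N m)) \<and>
     (\<forall>x\<in>gpd_mor G N n. Fmor x \<in> gpd_mor G N m \<and>
        gpd_src (Fmor x) = Fob (gpd_src x) \<and>
        gpd_tgt N \<pi> m (Fmor x) = Fob (gpd_tgt N \<pi> n x)) \<and>
     (\<forall>\<sigma>\<in>carrier (N n). Fmor (gpd_id G n \<sigma>) = gpd_id G m (Fob \<sigma>)) \<and>
     (\<forall>x\<in>gpd_mor G N n. \<forall>y\<in>gpd_mor G N n. gpd_src y = gpd_tgt N \<pi> n x \<longrightarrow>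
        Fmor (gpd_comp G n y x) = gpd_comp G m (Fmor y) (Fmor x))"

definition gpd_s ::
  "(nat \<Rightarrow> 'g monoid) \<Rightarrow> (nat \<Rightarrow> nat \<Rightarrow> 'g \<Rightarrow> 'g) \<Rightarrow>
   (nat \<Rightarrow> 'n monoid) \<Rightarrow> (nat \<Rightarrow> 'n \<Rightarrow> nat \<Rightarrow> nat) \<Rightarrow> (nat \<Rightarrow> nat \<Rightarrow> 'n \<Rightarrow> 'n) \<Rightarrow>
   nat \<Rightarrow> nat \<Rightarrow> 'n \<times> 'g \<Rightarrow> 'n \<times> 'g" where
  "gpd_s G sG N actN sN n i x =
     (sN n i (fst x),
      inv\<^bsub>G (Suc n)\<^esub> (sG n (actN n (inv\<^bsub>N n\<^esub> (fst x)) i) (inv\<^bsub>G n\<^esub> (snd x))))"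

definition gpd_d ::
  "(nat \<Rightarrow> 'g monoid) \<Rightarrow> (nat \<Rightarrow> nat \<Rightarrow> 'g \<Rightarrow> 'g) \<Rightarrow>
   (nat \<Rightarrow> 'n monoid) \<Rightarrow> (nat \<Rightarrow> 'n \<Rightarrow> nat \<Rightarrow> nat) \<Rightarrow> (nat \<Rightarrow> nat \<Rightarrow> 'n \<Rightarrow> 'n) \<Rightarrow>
   nat \<Rightarrow> nat \<Rightarrow> 'n \<times> 'g \<Rightarrow> 'n \<times> 'g" where
  "gpd_d G dG N actN dN n i x =
     (dN n i (fst x),
      inv\<^bsub>G (n - 1)\<^esub> (dG n (actN n (inv\<^bsub>N n\<^esub> (fst x)) i) (inv\<^bsub>G n\<^esub> (snd x))))"

end

theory Submission
  imports Defs
begin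

lemma grp_cancel:
  assumes "group H" "c \<in> carrier H" "a \<in> carrier H" "b \<in> carrier H"
    "c \<otimes>\<^bsub>H\<^esub> a = c \<otimes>\<^bsub>H\<^esub> b"
  shows "a = b"
  using assms by (metis group.Units_eq monoid.Units_l_cancel group.is_monoid)

lemma cancel2:
  assumes "group H" "c \<in> carrier H" "a \<in> carrier H" "b \<in> carrier H"
    "E1 = c \<otimes>\<^bsub>H\<^esub> a" "E2 = c \<otimes>\<^bsub>H\<^esub> b" "E1 = E2"
  shows "a = b"
  using grp_cancel[OF assms(1-4)] assms(5-7) by simp

locale csg =
  fixes G :: "nat \<Rightarrow> 'g monoid" and act :: "nat \<Rightarrow> 'g \<Rightarrow> nat \<Rightarrow> nat"
    and d s :: "nat \<Rightarrow> nat \<Rightarrow> 'g \<Rightarrow> 'g"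
  assumes csg: "crossed_simplicial_group G act d s"
begin

lemmas C = csg[unfolded crossed_simplicial_group_def]

lemma grp: "group (G n)" using conjunct1[OF C] by blast
lemma act_le: "g \<in> carrier (G n) \<Longrightarrow> i \<le> n \<Longrightarrow> act n g i \<le> n"
  using conjunct1[OF conjunct2[OF C]] by blast
lemma act_one: "i \<le> n \<Longrightarrow> act n \<one>\<^bsub>G n\<^esub> i = i"
  using conjunct1[OF conjunct2[OF conjunct2[OF C]]] by blast
lemma act_mult: "g \<in> carrier (G n) \<Longrightarrow> h \<in> carrier (G n) \<Longrightarrow> i \<le> n \<Longrightarrow>
   act n (g \<otimes>\<^bsub>G n\<^esub> h) i = act n g (act n h i)"
  using conjunct1[OF conjunct2[OF conjunct2[OF conjunct2[OF C]]]] by blast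
lemma ss: "simplicial_set (\<lambda>n. carrier (G n)) d s"
  using conjunct1[OF conjunct2[OF conjunct2[OF conjunct2[OF conjunct2[OF C]]]]] by blast
lemma d_mult: "1 \<le> n \<Longrightarrow> i \<le> n \<Longrightarrow> g \<in> carrier (G n) \<Longrightarrow> h \<in> carrier (G n) \<Longrightarrow>
        d n i (g \<otimes>\<^bsub>G n\<^esub> h) =
          d n i g \<otimes>\<^bsub>G (n - 1)\<^esub> d n (act n (inv\<^bsub>G n\<^esub> g) i) h"
  using conjunct1[OF conjunct2[OF conjunct2[OF conjunct2[OF conjunct2[OF conjunct2[OF C]]]]]] by blast
lemma s_mult: "i \<le> n \<Longrightarrow> g \<in> carrier (G n) \<Longrightarrow> h \<in> carrier (G n) \<Longrightarrow>
        s n i (g \<otimes>\<^bsub>G n\<^esub> h) =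
          s n i g \<otimes>\<^bsub>G (Suc n)\<^esub> s n (act n (inv\<^bsub>G n\<^esub> g) i) h"
  using conjunct2[OF conjunct2[OF conjunct2[OF conjunct2[OF conjunct2[OF conjunct2[OF C]]]]]] by blast

lemmas S = ss[unfolded simplicial_set_def]

lemma d_closed: "1 \<le> n \<Longrightarrow> i \<le> n \<Longrightarrow> x \<in> carrier (G n) \<Longrightarrow> d n i x \<in> carrier (G (n - 1))"
  using conjunct1[OF S] by blast
lemma s_closed: "i \<le> n \<Longrightarrow> x \<in> carrier (G n) \<Longrightarrow> s n i x \<in> carrier (G (Suc n))"
  using conjunct1[OF conjunct2[OF S]] by blast
lemma dd: "2 \<le> n \<Longrightarrow> i < j \<Longrightarrow> j \<le> n \<Longrightarrow> x \<in> carrier (G n) \<Longrightarrow>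
        d (n - 1) i (d n j x) = d (n - 1) (j - 1) (d n i x)"
  using conjunct1[OF conjunct2[OF conjunct2[OF S]]] by blast
lemma ds_lt: "i < j \<Longrightarrow> j \<le> n \<Longrightarrow> x \<in> carrier (G n) \<Longrightarrow>
        d (Suc n) i (s n j x) = s (n - 1) (j - 1) (d n i x)"
  using conjunct1[OF conjunct2[OF conjunct2[OF conjunct2[OF S]]]] by blast
lemma ds_eq: "j \<le> n \<Longrightarrow> x \<in> carrier (G n) \<Longrightarrow> d (Suc n) j (s n j x) = x"
  using conjunct1[OF conjunct2[OF conjunct2[OF conjunct2[OF conjunct2[OF S]]]]] by blast
lemma ds_eq1: "j \<le> n \<Longrightarrow> x \<in> carrier (G n) \<Longrightarrow> d (Suc n) (Suc j) (s n j x) = x"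
  using conjunct1[OF conjunct2[OF conjunct2[OF conjunct2[OF conjunct2[OF S]]]]] by blast
lemma ds_gt: "Suc j < i \<Longrightarrow> i \<le> Suc n \<Longrightarrow> x \<in> carrier (G n) \<Longrightarrow>
        d (Suc n) i (s n j x) = s (n - 1) j (d n (i - 1) x)"
  using conjunct1[OF conjunct2[OF conjunct2[OF conjunct2[OF conjunct2[OF conjunct2[OF S]]]]]] by blast
lemma sss: "i \<le> j \<Longrightarrow> j \<le> n \<Longrightarrow> x \<in> carrier (G n) \<Longrightarrow>
        s (Suc n) i (s n j x) = s (Suc n) (Suc j) (s n i x)"
  using conjunct2[OF conjunct2[OF conjunct2[OF conjunct2[OF conjunct2[OF conjunct2[OF S]]]]]] by blast

lemma inv_c: "g \<in> carrier (G n) \<Longrightarrow> inv\<^bsub>G n\<^esub> g \<in> carrier (G n)"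
  by (rule group.inv_closed[OF grp])

lemma s_one: assumes "i \<le> n" shows "s n i \<one>\<^bsub>G n\<^esub> = \<one>\<^bsub>G (Suc n)\<^esub>"
proof -
  have o: "\<one>\<^bsub>G n\<^esub> \<in> carrier (G n)" by (rule monoid.one_closed[OF group.is_monoid[OF grp]])
  have "s n i \<one>\<^bsub>G n\<^esub> = s n i (\<one>\<^bsub>G n\<^esub> \<otimes>\<^bsub>G n\<^esub> \<one>\<^bsub>G n\<^esub>)"
    using grp o by (simp add: group.is_monoid monoid.l_one)
  also have "\<dots> = s n i \<one>\<^bsub>G n\<^esub> \<otimes>\<^bsub>G (Suc n)\<^esub> s n i \<one>\<^bsub>G n\<^esub>"
    using s_mult[OF assms o o] grp act_one[OF assms] by (simp add: group.is_monoid monoid.inv_one)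
  finally show ?thesis using group.l_cancel_one'[OF grp s_closed[OF assms o] s_closed[OF assms o]] by simp
qed

lemma d_one: assumes "1 \<le> n" "i \<le> n" shows "d n i \<one>\<^bsub>G n\<^esub> = \<one>\<^bsub>G (n - 1)\<^esub>"
proof -
  have o: "\<one>\<^bsub>G n\<^esub> \<in> carrier (G n)" by (rule monoid.one_closed[OF group.is_monoid[OF grp]])
  have "d n i \<one>\<^bsub>G n\<^esub> = d n i (\<one>\<^bsub>G n\<^esub> \<otimes>\<^bsub>G n\<^esub> \<one>\<^bsub>G n\<^esub>)"
    using grp o by (simp add: group.is_monoid monoid.l_one)
  also have "\<dots> = d n i \<one>\<^bsub>G n\<^esub> \<otimes>\<^bsub>G (n - 1)\<^esub> d n i \<one>\<^bsub>G n\<^esub>"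
    using d_mult[OF assms o o] grp act_one[OF assms(2)] by (simp add: group.is_monoid monoid.inv_one)
  finally show ?thesis using group.l_cancel_one'[OF grp d_closed[OF assms o] d_closed[OF assms o]] by simp
qed

lemma tw_dd:
  assumes n: "2 \<le> n" and ij: "i < j" "j \<le> n" and g: "g \<in> carrier (G n)" and k: "k \<in> carrier (G n)"
  shows "d (n - 1) (act (n - 1) (inv\<^bsub>G (n - 1)\<^esub> (d n j g)) i) (d n (act n (inv\<^bsub>G n\<^esub> g) j) k)
       = d (n - 1) (act (n - 1) (inv\<^bsub>G (n - 1)\<^esub> (d n i g)) (j - 1)) (d n (act n (inv\<^bsub>G n\<^esub> g) i) k)"
proof -
  have n1: "1 \<le> n" "1 \<le> n - 1" using n by auto
  have gk: "g \<otimes>\<^bsub>G n\<^esub> k \<in> carrier (G n)" by (rule monoid.m_closed[OF group.is_monoid[OF grp] g k])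
  have aj: "act n (inv\<^bsub>G n\<^esub> g) j \<le> n" "act n (inv\<^bsub>G n\<^esub> g) i \<le> n" using act_le inv_c g ij by auto
  have c1: "d n j g \<in> carrier (G (n - 1))" "d n i g \<in> carrier (G (n - 1))"
    using d_closed n1 g ij by auto
  have c2: "d n (act n (inv\<^bsub>G n\<^esub> g) j) k \<in> carrier (G (n - 1))" "d n (act n (inv\<^bsub>G n\<^esub> g) i) k \<in> carrier (G (n - 1))"
    using d_closed n1 k aj by auto
  have b1: "act (n - 1) (inv\<^bsub>G (n - 1)\<^esub> (d n j g)) i \<le> n - 1"
    "act (n - 1) (inv\<^bsub>G (n - 1)\<^esub> (d n i g)) (j - 1) \<le> n - 1"
    using act_le inv_c c1 ij by auto
  have L: "d (n - 1) i (d n j (g \<otimes>\<^bsub>G n\<^esub> k)) = d (n - 1) i (d n j g) \<otimes>\<^bsub>G (n - 1 - 1)\<^esub>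
     d (n - 1) (act (n - 1) (inv\<^bsub>G (n - 1)\<^esub> (d n j g)) i) (d n (act n (inv\<^bsub>G n\<^esub> g) j) k)"
    using d_mult[OF n1(1) ij(2) g k] d_mult[OF n1(2) _ c1(1) c2(1)] ij by simp
  have R: "d (n - 1) (j - 1) (d n i (g \<otimes>\<^bsub>G n\<^esub> k)) = d (n - 1) (j - 1) (d n i g) \<otimes>\<^bsub>G (n - 1 - 1)\<^esub>
     d (n - 1) (act (n - 1) (inv\<^bsub>G (n - 1)\<^esub> (d n i g)) (j - 1)) (d n (act n (inv\<^bsub>G n\<^esub> g) i) k)"
    using d_mult[OF n1(1) _ g k] d_mult[OF n1(2) _ c1(2) c2(2)] ij by simp
  have i1: "i \<le> n - 1" using ij by simp
  have R': "d (n - 1) (j - 1) (d n i (g \<otimes>\<^bsub>G n\<^esub> k)) = d (n - 1) i (d n j g) \<otimes>\<^bsub>G (n - 1 - 1)\<^esub>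
     d (n - 1) (act (n - 1) (inv\<^bsub>G (n - 1)\<^esub> (d n i g)) (j - 1)) (d n (act n (inv\<^bsub>G n\<^esub> g) i) k)"
    using R dd[OF n ij g] by simp
  show ?thesis
    by (rule cancel2[OF grp d_closed[OF n1(2) i1 c1(1)] d_closed[OF n1(2) b1(1) c2(1)]
          d_closed[OF n1(2) b1(2) c2(2)] L R' dd[OF n ij gk]])
qed

lemma tw_ds_lt:
  assumes ij: "i < j" "j \<le> n" and g: "g \<in> carrier (G n)" and k: "k \<in> carrier (G n)"
  shows "d (Suc n) (act (Suc n) (inv\<^bsub>G (Suc n)\<^esub> (s n j g)) i) (s n (act n (inv\<^bsub>G n\<^esub> g) j) k)
       = s (n - 1) (act (n - 1) (inv\<^bsub>G (n - 1)\<^esub> (d n i g)) (j - 1)) (d n (act n (inv\<^bsub>G n\<^esub> g) i) k)"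
proof -
  obtain m where m: "n = Suc m" using ij by (cases n) auto
  have gk: "g \<otimes>\<^bsub>G n\<^esub> k \<in> carrier (G n)" by (rule monoid.m_closed[OF group.is_monoid[OF grp] g k])
  have aj: "act n (inv\<^bsub>G n\<^esub> g) j \<le> n" "act n (inv\<^bsub>G n\<^esub> g) i \<le> n" using act_le inv_c g ij by auto
  have c1: "s n j g \<in> carrier (G (Suc n))" "d n i g \<in> carrier (G m)"
    using s_closed[OF ij(2) g] d_closed[of n i g] g ij m by auto
  have c2: "s n (act n (inv\<^bsub>G n\<^esub> g) j) k \<in> carrier (G (Suc n))" "d n (act n (inv\<^bsub>G n\<^esub> g) i) k \<in> carrier (G m)"
    using s_closed[OF aj(1) k] d_closed[OF _ aj(2) k] m by auto
  have b1: "act (Suc n) (inv\<^bsub>G (Suc n)\<^esub> (s n j g)) i \<le> Suc n"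
    "act m (inv\<^bsub>G m\<^esub> (d n i g)) (j - 1) \<le> m"
    using act_le inv_c c1 ij m by auto
  have L: "d (Suc n) i (s n j (g \<otimes>\<^bsub>G n\<^esub> k)) = d (Suc n) i (s n j g) \<otimes>\<^bsub>G n\<^esub>
     d (Suc n) (act (Suc n) (inv\<^bsub>G (Suc n)\<^esub> (s n j g)) i) (s n (act n (inv\<^bsub>G n\<^esub> g) j) k)"
    using s_mult[OF ij(2) g k] d_mult[of "Suc n" i, OF _ _ c1(1) c2(1)] ij by simp
  have R: "s m (j - 1) (d n i (g \<otimes>\<^bsub>G n\<^esub> k)) = s m (j - 1) (d n i g) \<otimes>\<^bsub>G n\<^esub>
     s m (act m (inv\<^bsub>G m\<^esub> (d n i g)) (j - 1)) (d n (act n (inv\<^bsub>G n\<^esub> g) i) k)"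
    using d_mult[of n i, OF _ _ g k] s_mult[of "j - 1" m, OF _ c1(2) c2(2)] ij m by simp
  have cc: "s m (j - 1) (d n i g) \<in> carrier (G n)" using s_closed[OF _ c1(2), of "j - 1"] ij m by simp
  have ca: "d (Suc n) (act (Suc n) (inv\<^bsub>G (Suc n)\<^esub> (s n j g)) i) (s n (act n (inv\<^bsub>G n\<^esub> g) j) k) \<in> carrier (G n)"
    using d_closed[OF _ b1(1) c2(1)] by simp
  have cb: "s m (act m (inv\<^bsub>G m\<^esub> (d n i g)) (j - 1)) (d n (act n (inv\<^bsub>G n\<^esub> g) i) k) \<in> carrier (G n)"
    using s_closed[OF b1(2) c2(2)] m by simp
  have L': "d (Suc n) i (s n j (g \<otimes>\<^bsub>G n\<^esub> k)) = s m (j - 1) (d n i g) \<otimes>\<^bsub>G n\<^esub>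
     d (Suc n) (act (Suc n) (inv\<^bsub>G (Suc n)\<^esub> (s n j g)) i) (s n (act n (inv\<^bsub>G n\<^esub> g) j) k)"
    using L ds_lt[OF ij g] m by simp
  have E: "d (Suc n) i (s n j (g \<otimes>\<^bsub>G n\<^esub> k)) = s m (j - 1) (d n i (g \<otimes>\<^bsub>G n\<^esub> k))"
    using ds_lt[OF ij gk] m by simp
  show ?thesis using cancel2[OF grp cc ca cb L' R E] m by simp
qed

lemma tw_ds_eq:
  assumes j: "j \<le> n" and g: "g \<in> carrier (G n)" and k: "k \<in> carrier (G n)"
  shows "d (Suc n) (act (Suc n) (inv\<^bsub>G (Suc n)\<^esub> (s n j g)) j) (s n (act n (inv\<^bsub>G n\<^esub> g) j) k) = k"
    and "d (Suc n) (act (Suc n) (inv\<^bsub>G (Suc n)\<^esub> (s n j g)) (Suc j)) (s n (act n (inv\<^bsub>G n\<^esub> g) j) k) = k"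
proof -
  have gk: "g \<otimes>\<^bsub>G n\<^esub> k \<in> carrier (G n)" by (rule monoid.m_closed[OF group.is_monoid[OF grp] g k])
  have aj: "act n (inv\<^bsub>G n\<^esub> g) j \<le> n" using act_le inv_c g j by auto
  have c1: "s n j g \<in> carrier (G (Suc n))" using s_closed g j by auto
  have c2: "s n (act n (inv\<^bsub>G n\<^esub> g) j) k \<in> carrier (G (Suc n))" using s_closed k aj by auto
  have b1: "act (Suc n) (inv\<^bsub>G (Suc n)\<^esub> (s n j g)) j \<le> Suc n"
    "act (Suc n) (inv\<^bsub>G (Suc n)\<^esub> (s n j g)) (Suc j) \<le> Suc n"
    using act_le inv_c c1 j by auto
  have L: "d (Suc n) j (s n j (g \<otimes>\<^bsub>G n\<^esub> k)) = d (Suc n) j (s n j g) \<otimes>\<^bsub>G n\<^esub>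
     d (Suc n) (act (Suc n) (inv\<^bsub>G (Suc n)\<^esub> (s n j g)) j) (s n (act n (inv\<^bsub>G n\<^esub> g) j) k)"
    using s_mult[OF j g k] d_mult[of "Suc n" j, OF _ _ c1 c2] j by simp
  have L1: "d (Suc n) (Suc j) (s n j (g \<otimes>\<^bsub>G n\<^esub> k)) = d (Suc n) (Suc j) (s n j g) \<otimes>\<^bsub>G n\<^esub>
     d (Suc n) (act (Suc n) (inv\<^bsub>G (Suc n)\<^esub> (s n j g)) (Suc j)) (s n (act n (inv\<^bsub>G n\<^esub> g) j) k)"
    using s_mult[OF j g k] d_mult[of "Suc n" "Suc j", OF _ _ c1 c2] j by simp
  show "d (Suc n) (act (Suc n) (inv\<^bsub>G (Suc n)\<^esub> (s n j g)) j) (s n (act n (inv\<^bsub>G n\<^esub> g) j) k) = k"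
  proof -
    have ca: "d (Suc n) (act (Suc n) (inv\<^bsub>G (Suc n)\<^esub> (s n j g)) j) (s n (act n (inv\<^bsub>G n\<^esub> g) j) k) \<in> carrier (G n)"
      using d_closed[OF _ b1(1) c2] by simp
    have L': "d (Suc n) j (s n j (g \<otimes>\<^bsub>G n\<^esub> k)) = g \<otimes>\<^bsub>G n\<^esub>
     d (Suc n) (act (Suc n) (inv\<^bsub>G (Suc n)\<^esub> (s n j g)) j) (s n (act n (inv\<^bsub>G n\<^esub> g) j) k)"
      using L ds_eq[OF j g] by simp
    show ?thesis by (rule cancel2[OF grp g ca k L' refl ds_eq[OF j gk]])
  qed
  show "d (Suc n) (act (Suc n) (inv\<^bsub>G (Suc n)\<^esub> (s n j g)) (Suc j)) (s n (act n (inv\<^bsub>G n\<^esub> g) j) k) = k"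
  proof -
    have ca: "d (Suc n) (act (Suc n) (inv\<^bsub>G (Suc n)\<^esub> (s n j g)) (Suc j)) (s n (act n (inv\<^bsub>G n\<^esub> g) j) k) \<in> carrier (G n)"
      using d_closed[OF _ b1(2) c2] by simp
    have L': "d (Suc n) (Suc j) (s n j (g \<otimes>\<^bsub>G n\<^esub> k)) = g \<otimes>\<^bsub>G n\<^esub>
     d (Suc n) (act (Suc n) (inv\<^bsub>G (Suc n)\<^esub> (s n j g)) (Suc j)) (s n (act n (inv\<^bsub>G n\<^esub> g) j) k)"
      using L1 ds_eq1[OF j g] by simp
    show ?thesis by (rule cancel2[OF grp g ca k L' refl ds_eq1[OF j gk]])
  qed
qed

lemma tw_ds_gt:
  assumes ij: "Suc j < i" "i \<le> Suc n" and g: "g \<in> carrier (G n)" and k: "k \<in> carrier (G n)"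
  shows "d (Suc n) (act (Suc n) (inv\<^bsub>G (Suc n)\<^esub> (s n j g)) i) (s n (act n (inv\<^bsub>G n\<^esub> g) j) k)
       = s (n - 1) (act (n - 1) (inv\<^bsub>G (n - 1)\<^esub> (d n (i - 1) g)) j) (d n (act n (inv\<^bsub>G n\<^esub> g) (i - 1)) k)"
proof -
  obtain m where m: "n = Suc m" using ij by (cases n) auto
  have gk: "g \<otimes>\<^bsub>G n\<^esub> k \<in> carrier (G n)" by (rule monoid.m_closed[OF group.is_monoid[OF grp] g k])
  have aj: "act n (inv\<^bsub>G n\<^esub> g) j \<le> n" "act n (inv\<^bsub>G n\<^esub> g) (i - 1) \<le> n" using act_le inv_c g ij by auto
  have c1: "s n j g \<in> carrier (G (Suc n))" "d n (i - 1) g \<in> carrier (G m)"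
    using s_closed[of j n g] d_closed[of n "i - 1" g] g ij m by auto
  have c2: "s n (act n (inv\<^bsub>G n\<^esub> g) j) k \<in> carrier (G (Suc n))" "d n (act n (inv\<^bsub>G n\<^esub> g) (i - 1)) k \<in> carrier (G m)"
    using s_closed[OF aj(1) k] d_closed[OF _ aj(2) k] m by auto
  have b1: "act (Suc n) (inv\<^bsub>G (Suc n)\<^esub> (s n j g)) i \<le> Suc n"
    "act m (inv\<^bsub>G m\<^esub> (d n (i - 1) g)) j \<le> m"
    using act_le inv_c c1 ij m by auto
  have L: "d (Suc n) i (s n j (g \<otimes>\<^bsub>G n\<^esub> k)) = d (Suc n) i (s n j g) \<otimes>\<^bsub>G n\<^esub>
     d (Suc n) (act (Suc n) (inv\<^bsub>G (Suc n)\<^esub> (s n j g)) i) (s n (act n (inv\<^bsub>G n\<^esub> g) j) k)"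
    using s_mult[of j n, OF _ g k] d_mult[of "Suc n" i, OF _ _ c1(1) c2(1)] ij by simp
  have R: "s m j (d n (i - 1) (g \<otimes>\<^bsub>G n\<^esub> k)) = s m j (d n (i - 1) g) \<otimes>\<^bsub>G n\<^esub>
     s m (act m (inv\<^bsub>G m\<^esub> (d n (i - 1) g)) j) (d n (act n (inv\<^bsub>G n\<^esub> g) (i - 1)) k)"
    using d_mult[of n "i - 1", OF _ _ g k] s_mult[of j m, OF _ c1(2) c2(2)] ij m by simp
  have cc: "s m j (d n (i - 1) g) \<in> carrier (G n)" using s_closed[OF _ c1(2), of j] ij m by simp
  have ca: "d (Suc n) (act (Suc n) (inv\<^bsub>G (Suc n)\<^esub> (s n j g)) i) (s n (act n (inv\<^bsub>G n\<^esub> g) j) k) \<in> carrier (G n)"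
    using d_closed[OF _ b1(1) c2(1)] by simp
  have cb: "s m (act m (inv\<^bsub>G m\<^esub> (d n (i - 1) g)) j) (d n (act n (inv\<^bsub>G n\<^esub> g) (i - 1)) k) \<in> carrier (G n)"
    using s_closed[OF b1(2) c2(2)] m by simp
  have L': "d (Suc n) i (s n j (g \<otimes>\<^bsub>G n\<^esub> k)) = s m j (d n (i - 1) g) \<otimes>\<^bsub>G n\<^esub>
     d (Suc n) (act (Suc n) (inv\<^bsub>G (Suc n)\<^esub> (s n j g)) i) (s n (act n (inv\<^bsub>G n\<^esub> g) j) k)"
    using L ds_gt[OF ij g] m by simp
  have E: "d (Suc n) i (s n j (g \<otimes>\<^bsub>G n\<^esub> k)) = s m j (d n (i - 1) (g \<otimes>\<^bsub>G n\<^esub> k))"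
    using ds_gt[OF ij gk] m by simp
  show ?thesis using cancel2[OF grp cc ca cb L' R E] m by simp
qed

lemma tw_ss:
  assumes ij: "i \<le> j" "j \<le> n" and g: "g \<in> carrier (G n)" and k: "k \<in> carrier (G n)"
  shows "s (Suc n) (act (Suc n) (inv\<^bsub>G (Suc n)\<^esub> (s n j g)) i) (s n (act n (inv\<^bsub>G n\<^esub> g) j) k)
       = s (Suc n) (act (Suc n) (inv\<^bsub>G (Suc n)\<^esub> (s n i g)) (Suc j)) (s n (act n (inv\<^bsub>G n\<^esub> g) i) k)"
proof -
  have gk: "g \<otimes>\<^bsub>G n\<^esub> k \<in> carrier (G n)" by (rule monoid.m_closed[OF group.is_monoid[OF grp] g k])
  have aj: "act n (inv\<^bsub>G n\<^esub> g) j \<le> n" "act n (inv\<^bsub>G n\<^esub> g) i \<le> n" using act_le inv_c g ij by auto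
  have c1: "s n j g \<in> carrier (G (Suc n))" "s n i g \<in> carrier (G (Suc n))"
    using s_closed g ij by auto
  have c2: "s n (act n (inv\<^bsub>G n\<^esub> g) j) k \<in> carrier (G (Suc n))" "s n (act n (inv\<^bsub>G n\<^esub> g) i) k \<in> carrier (G (Suc n))"
    using s_closed k aj by auto
  have b1: "act (Suc n) (inv\<^bsub>G (Suc n)\<^esub> (s n j g)) i \<le> Suc n"
    "act (Suc n) (inv\<^bsub>G (Suc n)\<^esub> (s n i g)) (Suc j) \<le> Suc n"
    using act_le inv_c c1 ij by auto
  have L: "s (Suc n) i (s n j (g \<otimes>\<^bsub>G n\<^esub> k)) = s (Suc n) i (s n j g) \<otimes>\<^bsub>G (Suc (Suc n))\<^esub>
     s (Suc n) (act (Suc n) (inv\<^bsub>G (Suc n)\<^esub> (s n j g)) i) (s n (act n (inv\<^bsub>G n\<^esub> g) j) k)"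
    using s_mult[OF ij(2) g k] s_mult[of i "Suc n", OF _ c1(1) c2(1)] ij by simp
  have R: "s (Suc n) (Suc j) (s n i (g \<otimes>\<^bsub>G n\<^esub> k)) = s (Suc n) (Suc j) (s n i g) \<otimes>\<^bsub>G (Suc (Suc n))\<^esub>
     s (Suc n) (act (Suc n) (inv\<^bsub>G (Suc n)\<^esub> (s n i g)) (Suc j)) (s n (act n (inv\<^bsub>G n\<^esub> g) i) k)"
    using s_mult[of i n, OF _ g k] s_mult[of "Suc j" "Suc n", OF _ c1(2) c2(2)] ij by simp
  have i1: "i \<le> Suc n" using ij by simp
  have R': "s (Suc n) (Suc j) (s n i (g \<otimes>\<^bsub>G n\<^esub> k)) = s (Suc n) i (s n j g) \<otimes>\<^bsub>G (Suc (Suc n))\<^esub>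
     s (Suc n) (act (Suc n) (inv\<^bsub>G (Suc n)\<^esub> (s n i g)) (Suc j)) (s n (act n (inv\<^bsub>G n\<^esub> g) i) k)"
    using R sss[OF ij g] by simp
  show ?thesis
    by (rule cancel2[OF grp s_closed[OF i1 c1(1)] s_closed[OF b1(1) c2(1)] s_closed[OF b1(2) c2(2)] L R' sss[OF ij gk]])
qed

lemma s_comp:
  assumes i: "i \<le> n" and g: "g \<in> carrier (G n)" and f: "f \<in> carrier (G n)" and h: "h \<in> carrier (G n)"
  shows "inv\<^bsub>G (Suc n)\<^esub> (s n (act n (inv\<^bsub>G n\<^esub> g) i) (inv\<^bsub>G n\<^esub> (h \<otimes>\<^bsub>G n\<^esub> f))) =
    inv\<^bsub>G (Suc n)\<^esub> (s n (act n (inv\<^bsub>G n\<^esub> (g \<otimes>\<^bsub>G n\<^esub> inv\<^bsub>G n\<^esub> f)) i) (inv\<^bsub>G n\<^esub> h))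
    \<otimes>\<^bsub>G (Suc n)\<^esub> inv\<^bsub>G (Suc n)\<^esub> (s n (act n (inv\<^bsub>G n\<^esub> g) i) (inv\<^bsub>G n\<^esub> f))"
proof -
  interpret H: group "G n" by (rule grp)
  interpret H1: group "G (Suc n)" by (rule grp)
  define k where "k = act n (inv\<^bsub>G n\<^esub> g) i"
  have k: "k \<le> n" unfolding k_def using act_le g i by simp
  have 1: "inv\<^bsub>G n\<^esub> (h \<otimes>\<^bsub>G n\<^esub> f) = inv\<^bsub>G n\<^esub> f \<otimes>\<^bsub>G n\<^esub> inv\<^bsub>G n\<^esub> h"
    using f h by (simp add: H.inv_mult_group)
  have 2: "act n (inv\<^bsub>G n\<^esub> (g \<otimes>\<^bsub>G n\<^esub> inv\<^bsub>G n\<^esub> f)) i = act n f k"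
    using f g i by (simp add: H.inv_mult_group act_mult k_def)
  have 3: "s n k (inv\<^bsub>G n\<^esub> f \<otimes>\<^bsub>G n\<^esub> inv\<^bsub>G n\<^esub> h) = s n k (inv\<^bsub>G n\<^esub> f) \<otimes>\<^bsub>G (Suc n)\<^esub> s n (act n f k) (inv\<^bsub>G n\<^esub> h)"
    using s_mult[OF k, of "inv\<^bsub>G n\<^esub> f" "inv\<^bsub>G n\<^esub> h"] f h by simp
  have c: "s n k (inv\<^bsub>G n\<^esub> f) \<in> carrier (G (Suc n))" "s n (act n f k) (inv\<^bsub>G n\<^esub> h) \<in> carrier (G (Suc n))"
    using s_closed k f h act_le by auto
  show ?thesis unfolding k_def[symmetric] 1 2 3 using c by (simp add: H1.inv_mult_group)
qed

lemma d_comp: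
  assumes n: "1 \<le> n" and i: "i \<le> n" and g: "g \<in> carrier (G n)" and f: "f \<in> carrier (G n)" and h: "h \<in> carrier (G n)"
  shows "inv\<^bsub>G (n - 1)\<^esub> (d n (act n (inv\<^bsub>G n\<^esub> g) i) (inv\<^bsub>G n\<^esub> (h \<otimes>\<^bsub>G n\<^esub> f))) =
    inv\<^bsub>G (n - 1)\<^esub> (d n (act n (inv\<^bsub>G n\<^esub> (g \<otimes>\<^bsub>G n\<^esub> inv\<^bsub>G n\<^esub> f)) i) (inv\<^bsub>G n\<^esub> h))
    \<otimes>\<^bsub>G (n - 1)\<^esub> inv\<^bsub>G (n - 1)\<^esub> (d n (act n (inv\<^bsub>G n\<^esub> g) i) (inv\<^bsub>G n\<^esub> f))"
proof -
  interpret H: group "G n" by (rule grp)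
  interpret H1: group "G (n - 1)" by (rule grp)
  define k where "k = act n (inv\<^bsub>G n\<^esub> g) i"
  have k: "k \<le> n" unfolding k_def using act_le g i by simp
  have 1: "inv\<^bsub>G n\<^esub> (h \<otimes>\<^bsub>G n\<^esub> f) = inv\<^bsub>G n\<^esub> f \<otimes>\<^bsub>G n\<^esub> inv\<^bsub>G n\<^esub> h"
    using f h by (simp add: H.inv_mult_group)
  have 2: "act n (inv\<^bsub>G n\<^esub> (g \<otimes>\<^bsub>G n\<^esub> inv\<^bsub>G n\<^esub> f)) i = act n f k"
    using f g i by (simp add: H.inv_mult_group act_mult k_def)
  have 3: "d n k (inv\<^bsub>G n\<^esub> f \<otimes>\<^bsub>G n\<^esub> inv\<^bsub>G n\<^esub> h) = d n k (inv\<^bsub>G n\<^esub> f) \<otimes>\<^bsub>G (n - 1)\<^esub> d n (act n f k) (inv\<^bsub>G n\<^esub> h)"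
    using d_mult[OF n k, of "inv\<^bsub>G n\<^esub> f" "inv\<^bsub>G n\<^esub> h"] f h by simp
  have c: "d n k (inv\<^bsub>G n\<^esub> f) \<in> carrier (G (n - 1))" "d n (act n f k) (inv\<^bsub>G n\<^esub> h) \<in> carrier (G (n - 1))"
    using d_closed n k f h act_le by auto
  show ?thesis unfolding k_def[symmetric] 1 2 3 using group.inv_mult_group[OF grp c(1) c(2)] by simp
qed

end

locale setting = G: csg G actG dG sG + N: csg N actN dN sN
  for G :: "nat \<Rightarrow> 'g monoid" and actG :: "nat \<Rightarrow> 'g \<Rightarrow> nat \<Rightarrow> nat"
    and dG sG :: "nat \<Rightarrow> nat \<Rightarrow> 'g \<Rightarrow> 'g"
    and N :: "nat \<Rightarrow> 'n monoid" and actN :: "nat \<Rightarrow> 'n \<Rightarrow> nat \<Rightarrow> nat"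
    and dN sN :: "nat \<Rightarrow> nat \<Rightarrow> 'n \<Rightarrow> 'n" +
  fixes \<pi> :: "nat \<Rightarrow> 'g \<Rightarrow> 'n"
  assumes q: "csg_quotient_map G actG dG sG N actN dN sN \<pi>"
begin

lemmas Q = q[unfolded csg_quotient_map_def]

lemma ghom: "group_hom (G n) (N n) (\<pi> n)"
  unfolding group_hom_def group_hom_axioms_def using G.grp N.grp conjunct1[OF Q] by blast

lemma pi_c: "g \<in> carrier (G n) \<Longrightarrow> \<pi> n g \<in> carrier (N n)"
  by (rule group_hom.hom_closed[OF ghom])
lemma pi_inv: "g \<in> carrier (G n) \<Longrightarrow> \<pi> n (inv\<^bsub>G n\<^esub> g) = inv\<^bsub>N n\<^esub> (\<pi> n g)"
  by (rule group_hom.hom_inv[OF ghom])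
lemma pi_d: "1 \<le> n \<Longrightarrow> i \<le> n \<Longrightarrow> g \<in> carrier (G n) \<Longrightarrow> dN n i (\<pi> n g) = \<pi> (n - 1) (dG n i g)"
  using conjunct1[OF conjunct2[OF conjunct2[OF Q]]] by simp
lemma pi_s: "i \<le> n \<Longrightarrow> g \<in> carrier (G n) \<Longrightarrow> sN n i (\<pi> n g) = \<pi> (Suc n) (sG n i g)"
  using conjunct1[OF conjunct2[OF conjunct2[OF conjunct2[OF Q]]]] by simp
lemma act_pi: "g \<in> carrier (G n) \<Longrightarrow> i \<le> n \<Longrightarrow> actN n (\<pi> n g) i = actG n g i"
  using conjunct2[OF conjunct2[OF conjunct2[OF conjunct2[OF Q]]]] by simp
lemma lift: "\<sigma> \<in> carrier (N n) \<Longrightarrow> \<exists>g\<in>carrier (G n). \<sigma> = \<pi> n g"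
  using conjunct1[OF conjunct2[OF Q]] by (metis imageE)

lemma gd: assumes "1 \<le> n" "i \<le> n" "g \<in> carrier (G n)"
  shows "gpd_d G dG N actN dN n i (\<pi> n g, f) =
     (\<pi> (n - 1) (dG n i g), inv\<^bsub>G (n - 1)\<^esub> (dG n (actG n (inv\<^bsub>G n\<^esub> g) i) (inv\<^bsub>G n\<^esub> f)))"
  using assms unfolding gpd_d_def by (simp add: pi_d pi_inv[symmetric] act_pi G.inv_c)

lemma gs: assumes "i \<le> n" "g \<in> carrier (G n)"
  shows "gpd_s G sG N actN sN n i (\<pi> n g, f) =
     (\<pi> (Suc n) (sG n i g), inv\<^bsub>G (Suc n)\<^esub> (sG n (actG n (inv\<^bsub>G n\<^esub> g) i) (inv\<^bsub>G n\<^esub> f)))"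
  using assms unfolding gpd_s_def by (simp add: pi_s pi_inv[symmetric] act_pi G.inv_c)

lemma mor_cases:
  assumes "x \<in> gpd_mor G N n"
  obtains g f where "g \<in> carrier (G n)" "f \<in> carrier (G n)" "x = (\<pi> n g, f)"
  using assms lift unfolding gpd_mor_def by (metis SigmaE)


lemma s_functor:
  assumes i: "i \<le> n"
  shows "gpd_functor G N \<pi> n (Suc n) (sN n i) (gpd_s G sG N actN sN n i)"
  unfolding gpd_functor_def
proof (intro conjI ballI impI)
  interpret H: group "G n" by (rule G.grp)
  interpret H1: group "G (Suc n)" by (rule G.grp)
  interpret K: group "N n" by (rule N.grp)
  interpret K1: group "N (Suc n)" by (rule N.grp)
  show "sN n i \<sigma> \<in> carrier (N (Suc n))" if "\<sigma> \<in> carrier (N n)" for \<sigma>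
    using N.s_closed i that by simp
  fix x assume x: "x \<in> gpd_mor G N n"
  then obtain g f where g: "g \<in> carrier (G n)" and f: "f \<in> carrier (G n)" and xe: "x = (\<pi> n g, f)"
    by (rule mor_cases)
  define k where "k = actG n (inv\<^bsub>G n\<^esub> g) i"
  have k: "k \<le> n" unfolding k_def using G.act_le g i by simp
  have S: "sG n k (inv\<^bsub>G n\<^esub> f) \<in> carrier (G (Suc n))" using G.s_closed k f by simp
  have e: "gpd_s G sG N actN sN n i x = (\<pi> (Suc n) (sG n i g), inv\<^bsub>G (Suc n)\<^esub> (sG n k (inv\<^bsub>G n\<^esub> f)))"
    unfolding xe k_def using gs[OF i g] .
  show "gpd_s G sG N actN sN n i x \<in> gpd_mor G N (Suc n)"
    unfolding e gpd_mor_def using pi_c G.s_closed i g S by simp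
  show "gpd_src (gpd_s G sG N actN sN n i x) = sN n i (gpd_src x)"
    unfolding e gpd_src_def using pi_s i g xe by simp
  have gf: "g \<otimes>\<^bsub>G n\<^esub> inv\<^bsub>G n\<^esub> f \<in> carrier (G n)" using g f by simp
  have tx: "gpd_tgt N \<pi> n x = \<pi> n (g \<otimes>\<^bsub>G n\<^esub> inv\<^bsub>G n\<^esub> f)"
    unfolding gpd_tgt_def xe using group_hom.hom_mult[OF ghom g G.inv_c[OF f]] pi_inv[OF f] by simp
  show "gpd_tgt N \<pi> (Suc n) (gpd_s G sG N actN sN n i x) = sN n i (gpd_tgt N \<pi> n x)"
    unfolding tx e unfolding gpd_tgt_def fst_conv snd_conv
    using pi_inv[OF S] group.inv_inv[OF N.grp pi_c[OF S]] pi_s[OF i gf] G.s_mult[OF i g G.inv_c[OF f]]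
      group_hom.hom_mult[OF ghom G.s_closed[OF i g] S] k_def by simp
next
  interpret H: group "G n" by (rule G.grp)
  interpret H1: group "G (Suc n)" by (rule G.grp)
  fix \<sigma> assume "\<sigma> \<in> carrier (N n)"
  then obtain g where g: "g \<in> carrier (G n)" and s: "\<sigma> = \<pi> n g" using lift by blast
  have k: "actG n (inv\<^bsub>G n\<^esub> g) i \<le> n" using G.act_le g i by simp
  show "gpd_s G sG N actN sN n i (gpd_id G n \<sigma>) = gpd_id G (Suc n) (sN n i \<sigma>)"
    unfolding gpd_id_def s gs[OF i g] using G.s_one[OF k] pi_s[OF i g] by simp
next
  interpret H: group "G n" by (rule G.grp)
  interpret H1: group "G (Suc n)" by (rule G.grp)
  fix x y assume x: "x \<in> gpd_mor G N n" and y: "y \<in> gpd_mor G N n" and yx: "gpd_src y = gpd_tgt N \<pi> n x"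
  from x obtain g f where g: "g \<in> carrier (G n)" and f: "f \<in> carrier (G n)" and xe: "x = (\<pi> n g, f)"
    by (rule mor_cases)
  have gf: "g \<otimes>\<^bsub>G n\<^esub> inv\<^bsub>G n\<^esub> f \<in> carrier (G n)" using g f by simp
  have tx: "gpd_tgt N \<pi> n x = \<pi> n (g \<otimes>\<^bsub>G n\<^esub> inv\<^bsub>G n\<^esub> f)"
    unfolding gpd_tgt_def xe using group_hom.hom_mult[OF ghom g G.inv_c[OF f]] pi_inv[OF f] by simp
  obtain h where h: "h \<in> carrier (G n)" and ye: "y = (\<pi> n (g \<otimes>\<^bsub>G n\<^esub> inv\<^bsub>G n\<^esub> f), h)"
    using y yx tx unfolding gpd_mor_def gpd_src_def by (cases y) auto
  show "gpd_s G sG N actN sN n i (gpd_comp G n y x) =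
        gpd_comp G (Suc n) (gpd_s G sG N actN sN n i y) (gpd_s G sG N actN sN n i x)"
    unfolding gpd_comp_def xe ye
    using gs[OF i g] gs[OF i gf] G.s_comp[OF i g f h] by simp
qed

lemma d_functor:
  assumes n: "1 \<le> n" and i: "i \<le> n"
  shows "gpd_functor G N \<pi> n (n - 1) (dN n i) (gpd_d G dG N actN dN n i)"
  unfolding gpd_functor_def
proof (intro conjI ballI impI)
  interpret H: group "G n" by (rule G.grp)
  interpret H1: group "G (n - 1)" by (rule G.grp)
  show "dN n i \<sigma> \<in> carrier (N (n - 1))" if "\<sigma> \<in> carrier (N n)" for \<sigma>
    using N.d_closed n i that by simp
  fix x assume x: "x \<in> gpd_mor G N n"
  then obtain g f where g: "g \<in> carrier (G n)" and f: "f \<in> carrier (G n)" and xe: "x = (\<pi> n g, f)"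
    by (rule mor_cases)
  define k where "k = actG n (inv\<^bsub>G n\<^esub> g) i"
  have k: "k \<le> n" unfolding k_def using G.act_le g i by simp
  have S: "dG n k (inv\<^bsub>G n\<^esub> f) \<in> carrier (G (n - 1))" using G.d_closed n k f by simp
  have e: "gpd_d G dG N actN dN n i x = (\<pi> (n - 1) (dG n i g), inv\<^bsub>G (n - 1)\<^esub> (dG n k (inv\<^bsub>G n\<^esub> f)))"
    unfolding xe k_def using gd[OF n i g] .
  show "gpd_d G dG N actN dN n i x \<in> gpd_mor G N (n - 1)"
    unfolding e gpd_mor_def using pi_c[OF G.d_closed[OF n i g]] G.inv_c[OF S] by simp
  show "gpd_src (gpd_d G dG N actN dN n i x) = dN n i (gpd_src x)"
    unfolding e gpd_src_def using pi_d n i g xe by simp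
  have gf: "g \<otimes>\<^bsub>G n\<^esub> inv\<^bsub>G n\<^esub> f \<in> carrier (G n)" using g f by simp
  have tx: "gpd_tgt N \<pi> n x = \<pi> n (g \<otimes>\<^bsub>G n\<^esub> inv\<^bsub>G n\<^esub> f)"
    unfolding gpd_tgt_def xe using group_hom.hom_mult[OF ghom g G.inv_c[OF f]] pi_inv[OF f] by simp
  show "gpd_tgt N \<pi> (n - 1) (gpd_d G dG N actN dN n i x) = dN n i (gpd_tgt N \<pi> n x)"
    unfolding tx e unfolding gpd_tgt_def fst_conv snd_conv
    using pi_inv[OF S] group.inv_inv[OF N.grp pi_c[OF S]] pi_d[OF n i gf] G.d_mult[OF n i g G.inv_c[OF f]]
      group_hom.hom_mult[OF ghom G.d_closed[OF n i g] S] k_def by simp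
next
  interpret H: group "G n" by (rule G.grp)
  interpret H1: group "G (n - 1)" by (rule G.grp)
  fix \<sigma> assume "\<sigma> \<in> carrier (N n)"
  then obtain g where g: "g \<in> carrier (G n)" and s: "\<sigma> = \<pi> n g" using lift by blast
  have k: "actG n (inv\<^bsub>G n\<^esub> g) i \<le> n" using G.act_le g i by simp
  show "gpd_d G dG N actN dN n i (gpd_id G n \<sigma>) = gpd_id G (n - 1) (dN n i \<sigma>)"
    unfolding gpd_id_def s gd[OF n i g] using G.d_one[OF n k] pi_d[OF n i g] by (simp add: monoid.inv_one[OF group.is_monoid[OF G.grp]])
next
  interpret H: group "G n" by (rule G.grp)
  interpret H1: group "G (n - 1)" by (rule G.grp)
  fix x y assume x: "x \<in> gpd_mor G N n" and y: "y \<in> gpd_mor G N n" and yx: "gpd_src y = gpd_tgt N \<pi> n x"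
  from x obtain g f where g: "g \<in> carrier (G n)" and f: "f \<in> carrier (G n)" and xe: "x = (\<pi> n g, f)"
    by (rule mor_cases)
  have gf: "g \<otimes>\<^bsub>G n\<^esub> inv\<^bsub>G n\<^esub> f \<in> carrier (G n)" using g f by simp
  have tx: "gpd_tgt N \<pi> n x = \<pi> n (g \<otimes>\<^bsub>G n\<^esub> inv\<^bsub>G n\<^esub> f)"
    unfolding gpd_tgt_def xe using group_hom.hom_mult[OF ghom g G.inv_c[OF f]] pi_inv[OF f] by simp
  obtain h where h: "h \<in> carrier (G n)" and ye: "y = (\<pi> n (g \<otimes>\<^bsub>G n\<^esub> inv\<^bsub>G n\<^esub> f), h)"
    using y yx tx unfolding gpd_mor_def gpd_src_def by (cases y) auto
  show "gpd_d G dG N actN dN n i (gpd_comp G n y x) =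
        gpd_comp G (n - 1) (gpd_d G dG N actN dN n i y) (gpd_d G dG N actN dN n i x)"
    unfolding gpd_comp_def xe ye
    using gd[OF n i g] gd[OF n i gf] G.d_comp[OF n i g f h] by simp
qed


lemma gpd_simplicial:
  "simplicial_set (gpd_mor G N) (gpd_d G dG N actN dN) (gpd_s G sG N actN sN)"
  unfolding simplicial_set_def
proof (intro conjI)
  show "\<forall>n i x. 1 \<le> n \<and> i \<le> n \<and> x \<in> gpd_mor G N n \<longrightarrow> gpd_d G dG N actN dN n i x \<in> gpd_mor G N (n - 1)"
  proof (intro allI impI, elim conjE)
    fix n i x assume "1 \<le> n" "i \<le> n" "x \<in> gpd_mor G N n"
    then show "gpd_d G dG N actN dN n i x \<in> gpd_mor G N (n - 1)"
      using d_functor[of n i] unfolding gpd_functor_def by blast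
  qed
  show "\<forall>n i x. i \<le> n \<and> x \<in> gpd_mor G N n \<longrightarrow> gpd_s G sG N actN sN n i x \<in> gpd_mor G N (Suc n)"
  proof (intro allI impI, elim conjE)
    fix n i x assume "i \<le> n" "x \<in> gpd_mor G N n"
    then show "gpd_s G sG N actN sN n i x \<in> gpd_mor G N (Suc n)"
      using s_functor[of i n] unfolding gpd_functor_def by blast
  qed
  show "\<forall>n i j x. 2 \<le> n \<and> i < j \<and> j \<le> n \<and> x \<in> gpd_mor G N n \<longrightarrow>
     gpd_d G dG N actN dN (n - 1) i (gpd_d G dG N actN dN n j x) = gpd_d G dG N actN dN (n - 1) (j - 1) (gpd_d G dG N actN dN n i x)"
  proof (intro allI impI, elim conjE)
    fix n i j x assume n: "2 \<le> n" and ij: "i < j" "j \<le> n" and x: "x \<in> gpd_mor G N n"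
    then obtain g f where g: "g \<in> carrier (G n)" and f: "f \<in> carrier (G n)" and xe: "x = (\<pi> n g, f)"
      by (metis mor_cases)
    obtain m where m: "n = Suc (Suc m)" using n by (metis add_2_eq_Suc le_Suc_ex)
    interpret H1: group "G (Suc m)" by (rule G.grp)
    have fi: "inv\<^bsub>G n\<^esub> f \<in> carrier (G n)" by (rule G.inv_c[OF f])
    have A: "dG n (actG n (inv\<^bsub>G n\<^esub> g) j) (inv\<^bsub>G n\<^esub> f) \<in> carrier (G (Suc m))"
      "dG n (actG n (inv\<^bsub>G n\<^esub> g) i) (inv\<^bsub>G n\<^esub> f) \<in> carrier (G (Suc m))"
      using G.d_closed[of n _ "inv\<^bsub>G n\<^esub> f"] fi G.act_le[OF G.inv_c[OF g]] ij m by auto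
    have B: "dG n j g \<in> carrier (G (Suc m))" "dG n i g \<in> carrier (G (Suc m))"
      using G.d_closed[of n j g] G.d_closed[of n i g] g ij m by auto
    show "gpd_d G dG N actN dN (n - 1) i (gpd_d G dG N actN dN n j x) = gpd_d G dG N actN dN (n - 1) (j - 1) (gpd_d G dG N actN dN n i x)"
      unfolding xe using gd[of n j g f] gd[of n i g f] gd[of "Suc m" i "dG n j g"] gd[of "Suc m" "j - 1" "dG n i g"]
        A B g ij m G.dd[OF n ij g] G.tw_dd[OF n ij g fi]
      by simp
  qed
  show "\<forall>n i j x. i < j \<and> j \<le> n \<and> x \<in> gpd_mor G N n \<longrightarrow>
     gpd_d G dG N actN dN (Suc n) i (gpd_s G sG N actN sN n j x) = gpd_s G sG N actN sN (n - 1) (j - 1) (gpd_d G dG N actN dN n i x)"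
  proof (intro allI impI, elim conjE)
    fix n i j x assume ij: "i < j" "j \<le> n" and x: "x \<in> gpd_mor G N n"
    then obtain g f where g: "g \<in> carrier (G n)" and f: "f \<in> carrier (G n)" and xe: "x = (\<pi> n g, f)"
      by (metis mor_cases)
    obtain m where m: "n = Suc m" using ij by (cases n) auto
    interpret H1: group "G (Suc n)" by (rule G.grp)
    interpret H0: group "G m" by (rule G.grp)
    have fi: "inv\<^bsub>G n\<^esub> f \<in> carrier (G n)" by (rule G.inv_c[OF f])
    have A: "sG n (actG n (inv\<^bsub>G n\<^esub> g) j) (inv\<^bsub>G n\<^esub> f) \<in> carrier (G (Suc n))"
      "dG n (actG n (inv\<^bsub>G n\<^esub> g) i) (inv\<^bsub>G n\<^esub> f) \<in> carrier (G m)"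
      using G.d_closed[of n _ "inv\<^bsub>G n\<^esub> f"] G.s_closed[of _ n "inv\<^bsub>G n\<^esub> f"] fi G.act_le[OF G.inv_c[OF g]] ij m by auto
    have B: "sG n j g \<in> carrier (G (Suc n))" "dG n i g \<in> carrier (G m)"
      using G.s_closed[of j n g] G.d_closed[of n i g] g ij m by auto
    show "gpd_d G dG N actN dN (Suc n) i (gpd_s G sG N actN sN n j x) = gpd_s G sG N actN sN (n - 1) (j - 1) (gpd_d G dG N actN dN n i x)"
      unfolding xe using gs[of j n g f] gd[of n i g f] gd[of "Suc n" i "sG n j g"] gs[of "j - 1" m "dG n i g"]
        A B g ij m group.inv_inv[OF G.grp A(1)] group.inv_inv[OF G.grp A(2)] G.ds_lt[OF ij g] G.tw_ds_lt[OF ij g fi]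
      by simp
  qed
  show "\<forall>n j x. j \<le> n \<and> x \<in> gpd_mor G N n \<longrightarrow>
     gpd_d G dG N actN dN (Suc n) j (gpd_s G sG N actN sN n j x) = x \<and>
     gpd_d G dG N actN dN (Suc n) (Suc j) (gpd_s G sG N actN sN n j x) = x"
  proof (intro allI impI, elim conjE)
    fix n j x assume j: "j \<le> n" and x: "x \<in> gpd_mor G N n"
    then obtain g f where g: "g \<in> carrier (G n)" and f: "f \<in> carrier (G n)" and xe: "x = (\<pi> n g, f)"
      by (metis mor_cases)
    interpret H1: group "G (Suc n)" by (rule G.grp)
    interpret H0: group "G n" by (rule G.grp)
    have fi: "inv\<^bsub>G n\<^esub> f \<in> carrier (G n)" by (rule G.inv_c[OF f])
    have A: "sG n (actG n (inv\<^bsub>G n\<^esub> g) j) (inv\<^bsub>G n\<^esub> f) \<in> carrier (G (Suc n))"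
      using G.s_closed[of _ n "inv\<^bsub>G n\<^esub> f"] fi G.act_le[OF G.inv_c[OF g]] j by auto
    have B: "sG n j g \<in> carrier (G (Suc n))"
      using G.s_closed g j by auto
    show "gpd_d G dG N actN dN (Suc n) j (gpd_s G sG N actN sN n j x) = x \<and>
     gpd_d G dG N actN dN (Suc n) (Suc j) (gpd_s G sG N actN sN n j x) = x"
      unfolding xe using gs[of j n g f] gd[of "Suc n" j "sG n j g"] gd[of "Suc n" "Suc j" "sG n j g"]
        A B g f j group.inv_inv[OF G.grp A] group.inv_inv[OF G.grp f] G.ds_eq[OF j g] G.ds_eq1[OF j g] G.tw_ds_eq[OF j g fi]
      by simp
  qed
  show "\<forall>n i j x. Suc j < i \<and> i \<le> Suc n \<and> x \<in> gpd_mor G N n \<longrightarrow>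
     gpd_d G dG N actN dN (Suc n) i (gpd_s G sG N actN sN n j x) = gpd_s G sG N actN sN (n - 1) j (gpd_d G dG N actN dN n (i - 1) x)"
  proof (intro allI impI, elim conjE)
    fix n i j x assume ij: "Suc j < i" "i \<le> Suc n" and x: "x \<in> gpd_mor G N n"
    then obtain g f where g: "g \<in> carrier (G n)" and f: "f \<in> carrier (G n)" and xe: "x = (\<pi> n g, f)"
      by (metis mor_cases)
    obtain m where m: "n = Suc m" using ij by (cases n) auto
    interpret H1: group "G (Suc n)" by (rule G.grp)
    interpret H0: group "G m" by (rule G.grp)
    have fi: "inv\<^bsub>G n\<^esub> f \<in> carrier (G n)" by (rule G.inv_c[OF f])
    have A: "sG n (actG n (inv\<^bsub>G n\<^esub> g) j) (inv\<^bsub>G n\<^esub> f) \<in> carrier (G (Suc n))"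
      "dG n (actG n (inv\<^bsub>G n\<^esub> g) (i - 1)) (inv\<^bsub>G n\<^esub> f) \<in> carrier (G m)"
      using G.d_closed[of n _ "inv\<^bsub>G n\<^esub> f"] G.s_closed[of _ n "inv\<^bsub>G n\<^esub> f"] fi G.act_le[OF G.inv_c[OF g]] ij m by auto
    have B: "sG n j g \<in> carrier (G (Suc n))" "dG n (i - 1) g \<in> carrier (G m)"
      using G.s_closed[of j n g] G.d_closed[of n "i - 1" g] g ij m by auto
    show "gpd_d G dG N actN dN (Suc n) i (gpd_s G sG N actN sN n j x) = gpd_s G sG N actN sN (n - 1) j (gpd_d G dG N actN dN n (i - 1) x)"
      unfolding xe using gs[of j n g f] gd[of n "i - 1" g f] gd[of "Suc n" i "sG n j g"] gs[of j m "dG n (i - 1) g"]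
        A B g ij m group.inv_inv[OF G.grp A(1)] group.inv_inv[OF G.grp A(2)] G.ds_gt[OF ij g] G.tw_ds_gt[OF ij g fi]
      by simp
  qed
  show "\<forall>n i j x. i \<le> j \<and> j \<le> n \<and> x \<in> gpd_mor G N n \<longrightarrow>
     gpd_s G sG N actN sN (Suc n) i (gpd_s G sG N actN sN n j x) = gpd_s G sG N actN sN (Suc n) (Suc j) (gpd_s G sG N actN sN n i x)"
  proof (intro allI impI, elim conjE)
    fix n i j x assume ij: "i \<le> j" "j \<le> n" and x: "x \<in> gpd_mor G N n"
    then obtain g f where g: "g \<in> carrier (G n)" and f: "f \<in> carrier (G n)" and xe: "x = (\<pi> n g, f)"
      by (metis mor_cases)
    interpret H1: group "G (Suc n)" by (rule G.grp)
    have fi: "inv\<^bsub>G n\<^esub> f \<in> carrier (G n)" by (rule G.inv_c[OF f])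
    have A: "sG n (actG n (inv\<^bsub>G n\<^esub> g) j) (inv\<^bsub>G n\<^esub> f) \<in> carrier (G (Suc n))"
      "sG n (actG n (inv\<^bsub>G n\<^esub> g) i) (inv\<^bsub>G n\<^esub> f) \<in> carrier (G (Suc n))"
      using G.s_closed[of _ n "inv\<^bsub>G n\<^esub> f"] fi G.act_le[OF G.inv_c[OF g]] ij by auto
    have B: "sG n j g \<in> carrier (G (Suc n))" "sG n i g \<in> carrier (G (Suc n))"
      using G.s_closed g ij by auto
    show "gpd_s G sG N actN sN (Suc n) i (gpd_s G sG N actN sN n j x) = gpd_s G sG N actN sN (Suc n) (Suc j) (gpd_s G sG N actN sN n i x)"
      unfolding xe using gs[of j n g f] gs[of i n g f] gs[of i "Suc n" "sG n j g"] gs[of "Suc j" "Suc n" "sG n i g"]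
        A B g ij group.inv_inv[OF G.grp A(1)] group.inv_inv[OF G.grp A(2)] G.sss[OF ij g] G.tw_ss[OF ij g fi]
      by simp
  qed
qed

end
theorem lemma1p8:
  fixes G :: "nat \<Rightarrow> 'g monoid" and actG :: "nat \<Rightarrow> 'g \<Rightarrow> nat \<Rightarrow> nat"
    and dG sG :: "nat \<Rightarrow> nat \<Rightarrow> 'g \<Rightarrow> 'g"
    and N :: "nat \<Rightarrow> 'n monoid" and actN :: "nat \<Rightarrow> 'n \<Rightarrow> nat \<Rightarrow> nat"
    and dN sN :: "nat \<Rightarrow> nat \<Rightarrow> 'n \<Rightarrow> 'n"
    and \<pi> :: "nat \<Rightarrow> 'g \<Rightarrow> 'n"
  assumes "crossed_simplicial_group G actG dG sG"
    and "crossed_simplicial_group N actN dN sN"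
    and "csg_quotient_map G actG dG sG N actN dN sN \<pi>"
  shows "(\<forall>n i. i \<le> n \<longrightarrow>
            gpd_functor G N \<pi> n (Suc n) (sN n i) (gpd_s G sG N actN sN n i))
       \<and> (\<forall>n i. 1 \<le> n \<and> i \<le> n \<longrightarrow>
            gpd_functor G N \<pi> n (n - 1) (dN n i) (gpd_d G dG N actN dN n i))
       \<and> simplicial_set (gpd_mor G N) (gpd_d G dG N actN dN) (gpd_s G sG N actN sN)"
proof -
  interpret setting G actG dG sG N actN dN sN \<pi>
    unfolding setting_def setting_axioms_def csg_def using assms by (intro conjI)
  show ?thesis
  proof (intro conjI allI impI)
    fix n i :: nat assume "i \<le> n"
    then show "gpd_functor G N \<pi> n (Suc n) (sN n i) (gpd_s G sG N actN sN n i)" by (rule s_functor)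
  next
    fix n i :: nat assume "1 \<le> n \<and> i \<le> n"
    then show "gpd_functor G N \<pi> n (n - 1) (dN n i) (gpd_d G dG N actN dN n i)"
      using d_functor by blast
  next
    show "simplicial_set (gpd_mor G N) (gpd_d G dG N actN dN) (gpd_s G sG N actN sN)"
      by (rule gpd_simplicial)
  qed
qed

end
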